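(* Let $R$ be a monad on Sets, $LM$ a left $R$-module with values in Sets, and $CC$ a C-subsystem of $CC(R,LM)$, with $C=Ob(CC)$ and $\widetilde C=\widetilde{Ob}(CC)$. Let $(E_1,\dots,E_m),(T_1,\dots,T_n)\in C$ with $n\ge1$ and $(f_1,\dots,f_n)\in R([m])^n$. Then $(f_1,\dots,f_n)\in\mathrm{Hom}_{CC}((E_1,\dots,E_m),(T_1,\dots,T_n))$ if and only if $(f_1,\dots,f_{n-1})\in\mathrm{Hom}_{CC}((E_1,\dots,E_m),(T_1,\dots,T_{n-1}))$ and $(E_1,\dots,E_m,\,T_n(f_1/1,\dots,f_{n-1}/n-1),\,f_n)\in\widetilde C$.
   Context: Notation: $[n]=\{1,\dots,n\}$. $R$ is a monad on Sets (unit $\eta$, Kleisli extension $\mathrm{bind}$, satisfying the monad laws), $LM$ a left $R$-module (maps $\rho(f):LM(X)\to LM(Y)$ for $f:X\to R(Y)$ with $\rho(\eta_X)=\mathrm{id}$, $\rho(g)\circ\rho(f)=\rho(\mathrm{bind}(g)\circ f)$). Elements of $Y$ are regarded in $R(Y)$ via $\eta_Y$; $E(f_1/1,\dots,f_k/k)$ denotes $\rho(f)(E)$ or $\mathrm{bind}(f)(E)$ with $f(i)=f_i$. $CC(R,LM)$: objects $(T_1,\dots,T_n)$ with $T_i\in LM([i-1])$, $l=n$, $ft$ drops the last entry, $pt=()$; morphisms $(E_1,\dots,E_m)\to(T_1,\dots,T_n)$ are elements of $R([m])^n$, the composite of $f=(f_1,\dots,f_n)$ followed by $g=(g_1,\dots,g_k)$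 is $(g_j(f_1/1,\dots,f_n/n))_j$, identities $(1,\dots,n)$; $p_X=(1,\dots,n):(T_1,\dots,T_{n+1})\to(T_1,\dots,T_n)$; for $X=(T_1,\dots,T_{n+1})$ and $f=(f_1,\dots,f_n):(R_1,\dots,R_m)\to ft(X)$, $f^*X=(R_1,\dots,R_m,T_{n+1}(f_1/1,\dots,f_n/n))$, $q(f,X)=(f_1,\dots,f_n,m+1)$. A C-subsystem is a subcategory $CC$ containing $pt$, such that for every object $X$ of $CC$ with $l(X)>0$: $ft(X),p_X\in CC$; for $f:Y\to ft(X)$ in $CC$, $f^*X,q(f,X)\in CC$; for $f:Y\to X$ in $CC$, the morphism $s_f:Y\to(p_X\circ f)^*X$ with $p\circ s_f=\mathrm{id}$ and $q(p_X\circ f,X)\circ s_f=f$ is in $CC$. $\widetilde{Ob}(CC)$ is the set of morphisms $s:ft(X)\to X$ of $CC$ with $l(X)>0$ and $p_X\circ s=\mathrm{id}$; the section $(1,\dots,k,t):(A_1,\dots,A_k)\to(A_1,\dots,A_k,A)$ is identified with $(A_1,\dots,A_k,A,t)$. *)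

theory Defs
  imports Main
begin

text \<open>
  The finite set [n] = {1..n} is represented by the natural numbers 1..n.
  The monad R is given through its values on the finite sets [n] (the only ones the
  C-system CC(R,LM) uses): Rs n is the set R([n]) (elements of type 'r),
  eta n i is the unit eta_[n](i), and bind m k f t is the Kleisli extension of
  f : [m] -> R([k]) applied to t in R([m]).  Likewise LMs n = LM([n]) and
  rho m k f E = rho(f)(E) for f : [m] -> R([k]).  Functions [m] -> X are HOL functions
  nat => X, of which only the values on {1..m} matter (congruence axioms below).
\<close>

definition rmonad ::
  "(nat \<Rightarrow> 'r set) \<Rightarrow> (nat \<Rightarrow> nat \<Rightarrow> 'r) \<Rightarrow> (nat \<Rightarrow> nat \<Rightarrow> (nat \<Rightarrow> 'r) \<Rightarrow> 'r \<Rightarrow> 'r) \<Rightarrow> bool"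
where
  "rmonad Rs eta bind \<longleftrightarrow>
     (\<forall>n i. i \<in> {1..n} \<longrightarrow> eta n i \<in> Rs n) \<and>
     (\<forall>m k f t. (\<forall>i\<in>{1..m}. f i \<in> Rs k) \<longrightarrow> t \<in> Rs m \<longrightarrow> bind m k f t \<in> Rs k) \<and>
     (\<forall>m k f g t. (\<forall>i\<in>{1..m}. f i = g i) \<longrightarrow> t \<in> Rs m \<longrightarrow> bind m k f t = bind m k g t) \<and>
     (\<forall>n t. t \<in> Rs n \<longrightarrow> bind n n (eta n) t = t) \<and>
     (\<forall>m k f i. (\<forall>j\<in>{1..m}. f j \<in> Rs k) \<longrightarrow> i \<in> {1..m} \<longrightarrow> bind m k f (eta m i) = f i) \<and>
     (\<forall>m k l f g t. (\<forall>i\<in>{1..m}. f i \<in> Rs k) \<longrightarrow> (\<forall>j\<in>{1..k}. g j \<in> Rs l) \<longrightarrow> t \<in> Rs m \<longrightarrow>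
        bind k l g (bind m k f t) = bind m l (\<lambda>i. bind k l g (f i)) t)"

definition lmodule ::
  "(nat \<Rightarrow> 'r set) \<Rightarrow> (nat \<Rightarrow> nat \<Rightarrow> 'r) \<Rightarrow> (nat \<Rightarrow> nat \<Rightarrow> (nat \<Rightarrow> 'r) \<Rightarrow> 'r \<Rightarrow> 'r)
   \<Rightarrow> (nat \<Rightarrow> 'l set) \<Rightarrow> (nat \<Rightarrow> nat \<Rightarrow> (nat \<Rightarrow> 'r) \<Rightarrow> 'l \<Rightarrow> 'l) \<Rightarrow> bool"
where
  "lmodule Rs eta bind LMs rho \<longleftrightarrow>
     (\<forall>m k f E. (\<forall>i\<in>{1..m}. f i \<in> Rs k) \<longrightarrow> E \<in> LMs m \<longrightarrow> rho m k f E \<in> LMs k) \<and>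
     (\<forall>m k f g E. (\<forall>i\<in>{1..m}. f i = g i) \<longrightarrow> E \<in> LMs m \<longrightarrow> rho m k f E = rho m k g E) \<and>
     (\<forall>n E. E \<in> LMs n \<longrightarrow> rho n n (eta n) E = E) \<and>
     (\<forall>m k l f g E. (\<forall>i\<in>{1..m}. f i \<in> Rs k) \<longrightarrow> (\<forall>j\<in>{1..k}. g j \<in> Rs l) \<longrightarrow> E \<in> LMs m \<longrightarrow>
        rho k l g (rho m k f E) = rho m l (\<lambda>i. bind k l g (f i)) E)"

text \<open>The C-system CC(R,LM).  Objects are lists (T_1,...,T_n) with T_i in LM([i-1]).
  A morphism is a triple (domain, codomain, (f_1,...,f_n)).\<close>

type_synonym ('l, 'r) ccmor = "'l list \<times> 'l list \<times> 'r list"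

definition ccob :: "(nat \<Rightarrow> 'l set) \<Rightarrow> 'l list \<Rightarrow> bool" where
  "ccob LMs X \<longleftrightarrow> (\<forall>i<length X. X ! i \<in> LMs i)"

definition ccmor :: "(nat \<Rightarrow> 'r set) \<Rightarrow> (nat \<Rightarrow> 'l set) \<Rightarrow> ('l, 'r) ccmor \<Rightarrow> bool" where
  "ccmor Rs LMs F \<longleftrightarrow> (case F of (Y, X, f) \<Rightarrow>
     ccob LMs Y \<and> ccob LMs X \<and> length f = length X \<and> (\<forall>j<length f. f ! j \<in> Rs (length Y)))"

definition lfun :: "'r list \<Rightarrow> nat \<Rightarrow> 'r" where
  "lfun f i = f ! (i - 1)"

definition cc_dom :: "('l, 'r) ccmor \<Rightarrow> 'l list" where "cc_dom F = fst F"
definition cc_cod :: "('l, 'r) ccmor \<Rightarrow> 'l list" where "cc_cod F = fst (snd F)"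

text \<open>Composite of F : Y -> X followed by G : X -> Z.\<close>
definition cc_comp ::
  "(nat \<Rightarrow> nat \<Rightarrow> (nat \<Rightarrow> 'r) \<Rightarrow> 'r \<Rightarrow> 'r) \<Rightarrow> ('l, 'r) ccmor \<Rightarrow> ('l, 'r) ccmor \<Rightarrow> ('l, 'r) ccmor"
where
  "cc_comp bind F G = (case F of (Y, X, f) \<Rightarrow> case G of (_, Z, g) \<Rightarrow>
     (Y, Z, map (bind (length X) (length Y) (lfun f)) g))"

definition cc_id :: "(nat \<Rightarrow> nat \<Rightarrow> 'r) \<Rightarrow> 'l list \<Rightarrow> ('l, 'r) ccmor" where
  "cc_id eta X = (X, X, map (eta (length X)) [1..<length X + 1])"

definition cc_ft :: "'l list \<Rightarrow> 'l list" where "cc_ft X = butlast X"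

definition cc_p :: "(nat \<Rightarrow> nat \<Rightarrow> 'r) \<Rightarrow> 'l list \<Rightarrow> ('l, 'r) ccmor" where
  "cc_p eta X = (X, butlast X, map (eta (length X)) [1..<length X])"

definition cc_pb ::
  "(nat \<Rightarrow> nat \<Rightarrow> (nat \<Rightarrow> 'r) \<Rightarrow> 'l \<Rightarrow> 'l) \<Rightarrow> ('l, 'r) ccmor \<Rightarrow> 'l list \<Rightarrow> 'l list"
where
  "cc_pb rho F X = (case F of (Y, _, f) \<Rightarrow>
     Y @ [rho (length X - 1) (length Y) (lfun f) (last X)])"

text \<open>q(f,X) = (f_1,...,f_n,m+1) : f^*X -> X, the f_i in R([m]) being regarded in
  R([m+1]) along the inclusion [m] \<subseteq> [m+1] (i.e. via R applied to it).\<close>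
definition cc_q ::
  "(nat \<Rightarrow> nat \<Rightarrow> 'r) \<Rightarrow> (nat \<Rightarrow> nat \<Rightarrow> (nat \<Rightarrow> 'r) \<Rightarrow> 'r \<Rightarrow> 'r) \<Rightarrow> (nat \<Rightarrow> nat \<Rightarrow> (nat \<Rightarrow> 'r) \<Rightarrow> 'l \<Rightarrow> 'l)
   \<Rightarrow> ('l, 'r) ccmor \<Rightarrow> 'l list \<Rightarrow> ('l, 'r) ccmor"
where
  "cc_q eta bind rho F X = (case F of (Y, _, f) \<Rightarrow>
     (cc_pb rho F X, X,
      map (bind (length Y) (length Y + 1) (eta (length Y + 1))) f @ [eta (length Y + 1) (length Y + 1)]))"

text \<open>s_f : Y -> (p_X o f)^*X for F = (Y, X, f); in CC(R,LM) it is (1,...,m,f_n),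
  the unique morphism with p o s_f = id and q(p_X o f, X) o s_f = f.\<close>
definition cc_s ::
  "(nat \<Rightarrow> nat \<Rightarrow> 'r) \<Rightarrow> (nat \<Rightarrow> nat \<Rightarrow> (nat \<Rightarrow> 'r) \<Rightarrow> 'r \<Rightarrow> 'r) \<Rightarrow> (nat \<Rightarrow> nat \<Rightarrow> (nat \<Rightarrow> 'r) \<Rightarrow> 'l \<Rightarrow> 'l)
   \<Rightarrow> ('l, 'r) ccmor \<Rightarrow> ('l, 'r) ccmor"
where
  "cc_s eta bind rho F = (case F of (Y, X, f) \<Rightarrow>
     (Y, cc_pb rho (cc_comp bind F (cc_p eta X)) X,
      map (eta (length Y)) [1..<length Y + 1] @ [last f]))"

definition csubsystem ::
  "(nat \<Rightarrow> 'r set) \<Rightarrow> (nat \<Rightarrow> nat \<Rightarrow> 'r) \<Rightarrow> (nat \<Rightarrow> nat \<Rightarrow> (nat \<Rightarrow> 'r) \<Rightarrow> 'r \<Rightarrow> 'r)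
   \<Rightarrow> (nat \<Rightarrow> 'l set) \<Rightarrow> (nat \<Rightarrow> nat \<Rightarrow> (nat \<Rightarrow> 'r) \<Rightarrow> 'l \<Rightarrow> 'l)
   \<Rightarrow> 'l list set \<Rightarrow> ('l, 'r) ccmor set \<Rightarrow> bool"
where
  "csubsystem Rs eta bind LMs rho Ob Mor \<longleftrightarrow>
     \<comment> \<open>subcategory\<close>
     (\<forall>X\<in>Ob. ccob LMs X) \<and>
     (\<forall>F\<in>Mor. ccmor Rs LMs F \<and> cc_dom F \<in> Ob \<and> cc_cod F \<in> Ob) \<and>
     (\<forall>X\<in>Ob. cc_id eta X \<in> Mor) \<and>
     (\<forall>F\<in>Mor. \<forall>G\<in>Mor. cc_cod F = cc_dom G \<longrightarrow> cc_comp bind F G \<in> Mor) \<and>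
     \<comment> \<open>contains pt\<close>
     [] \<in> Ob \<and>
     \<comment> \<open>closure conditions\<close>
     (\<forall>X\<in>Ob. length X > 0 \<longrightarrow>
        cc_ft X \<in> Ob \<and> cc_p eta X \<in> Mor \<and>
        (\<forall>F\<in>Mor. cc_cod F = cc_ft X \<longrightarrow> cc_pb rho F X \<in> Ob \<and> cc_q eta bind rho F X \<in> Mor) \<and>
        (\<forall>F\<in>Mor. cc_cod F = X \<longrightarrow> cc_s eta bind rho F \<in> Mor))"

definition cc_Hom :: "('l, 'r) ccmor set \<Rightarrow> 'l list \<Rightarrow> 'l list \<Rightarrow> 'r list set" where
  "cc_Hom Mor Y X = {f. (Y, X, f) \<in> Mor}"

definition cc_Obtilde ::
  "(nat \<Rightarrow> nat \<Rightarrow> 'r) \<Rightarrow> (nat \<Rightarrow> nat \<Rightarrow> (nat \<Rightarrow> 'r) \<Rightarrow> 'r \<Rightarrow> 'r) \<Rightarrow> ('l, 'r) ccmor set \<Rightarrow> ('l, 'r) ccmor set"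
where
  "cc_Obtilde eta bind Mor = {S \<in> Mor. length (cc_cod S) > 0 \<and> cc_dom S = cc_ft (cc_cod S) \<and>
      cc_comp bind S (cc_p eta (cc_cod S)) = cc_id eta (cc_ft (cc_cod S))}"

text \<open>The identification of (A_1,...,A_k,A,t) with the section (1,...,k,t).\<close>
definition tilde_elt :: "(nat \<Rightarrow> nat \<Rightarrow> 'r) \<Rightarrow> 'l list \<Rightarrow> 'l \<Rightarrow> 'r \<Rightarrow> ('l, 'r) ccmor" where
  "tilde_elt eta As A t = (As, As @ [A], map (eta (length As)) [1..<length As + 1] @ [t])"

end

theory Submission
  imports Defs
begin

lemma lfun_sec1:
  assumes "i \<in> {1..m}"
  shows "lfun (map (eta m) [1..<m + 1] @ [t]) i = eta m i"
proof -
  have l: "length (map (eta m) [1..<m + 1]) = m" by simp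
  have "i - 1 < m" using assms by auto
  hence "(map (eta m) [1..<m + 1] @ [t]) ! (i - 1) = map (eta m) [1..<m + 1] ! (i - 1)"
    using l by (simp only: nth_append) simp
  also have "\<dots> = eta m (1 + (i - 1))" using \<open>i - 1 < m\<close>
  proof -
    have "[1..<m+1] ! (i-1) = 1 + (i-1)" by (rule nth_upt) (use \<open>i - 1 < m\<close> in simp)
    thus ?thesis using \<open>i - 1 < m\<close> by (simp del: upt_Suc)
  qed
  finally show ?thesis using assms unfolding lfun_def by simp
qed

lemma lfun_sec2:
  shows "lfun (map (eta m) [1..<m + 1] @ [t]) (m+1) = t"
  unfolding lfun_def by (auto simp: nth_append del: upt_Suc)

lemma map_eta_bind:
  assumes "\<And>i. i \<in> {1..k} \<Longrightarrow> bind n m g (eta n i) = g i"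
  shows "map (bind n m g) (map (eta n) [1..<k+1]) = map g [1..<k+1]"
  using assms by auto

theorem lemma4p3:
  fixes Rs :: "nat \<Rightarrow> 'r set" and eta :: "nat \<Rightarrow> nat \<Rightarrow> 'r"
    and bind :: "nat \<Rightarrow> nat \<Rightarrow> (nat \<Rightarrow> 'r) \<Rightarrow> 'r \<Rightarrow> 'r"
    and LMs :: "nat \<Rightarrow> 'l set" and rho :: "nat \<Rightarrow> nat \<Rightarrow> (nat \<Rightarrow> 'r) \<Rightarrow> 'l \<Rightarrow> 'l"
    and Ob :: "'l list set" and Mor :: "('l, 'r) ccmor set"
    and E T :: "'l list" and f :: "'r list"
  assumes "rmonad Rs eta bind"
    and "lmodule Rs eta bind LMs rho"
    and "csubsystem Rs eta bind LMs rho Ob Mor"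
    and "E \<in> Ob" and "T \<in> Ob" and "length T \<ge> 1"
    and "length f = length T" and "\<forall>j<length f. f ! j \<in> Rs (length E)"
  shows "f \<in> cc_Hom Mor E T \<longleftrightarrow>
           butlast f \<in> cc_Hom Mor E (butlast T) \<and>
           tilde_elt eta E (rho (length T - 1) (length E) (lfun (butlast f)) (last T)) (last f)
             \<in> cc_Obtilde eta bind Mor"
proof -
  define m where "m = length E"
  define n where "n = length T"
  define A where "A = rho (n - 1) m (lfun (butlast f)) (last T)"
  note M = assms(1)[unfolded rmonad_def]
  have eta_in: "\<And>k i. i \<in> {1..k} \<Longrightarrow> eta k i \<in> Rs k" using M[THEN conjunct1] by blast
  have bind_eta: "\<And>m k f i. (\<forall>j\<in>{1..m}. f j \<in> Rs k) \<Longrightarrow> i \<in> {1..m} \<Longrightarrow> bind m k f (eta m i) = f i"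
    by (meson M)
  have bind_cong: "\<And>m k f g t. (\<forall>i\<in>{1..m}. f i = g i) \<Longrightarrow> t \<in> Rs m \<Longrightarrow> bind m k f t = bind m k g t"
    by (meson M)
  have bind_id: "\<And>n t. t \<in> Rs n \<Longrightarrow> bind n n (eta n) t = t" by (meson M)
  have bind_assoc: "\<And>m k l f g t. (\<forall>i\<in>{1..m}. f i \<in> Rs k) \<Longrightarrow> (\<forall>j\<in>{1..k}. g j \<in> Rs l) \<Longrightarrow> t \<in> Rs m \<Longrightarrow>
        bind k l g (bind m k f t) = bind m l (\<lambda>i. bind k l g (f i)) t"
    using M[THEN conjunct2, THEN conjunct2, THEN conjunct2, THEN conjunct2, THEN conjunct2] by blast
  note C = assms(3)[unfolded csubsystem_def]
  have n1: "n \<ge> 1" using assms(6) n_def by simp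
  have fR: "\<forall>j\<in>{1..n}. lfun f j \<in> Rs m"
    using assms(7,8) unfolding lfun_def m_def n_def by auto
  have lastfR: "last f \<in> Rs m"
  proof -
    have "f \<noteq> []" using assms(7) n1 n_def by auto
    thus ?thesis using assms(7,8) n1 unfolding m_def n_def by (simp add: last_conv_nth)
  qed
  have pT: "cc_p eta T \<in> Mor" using C assms(5,6) by auto
  define Sf where "Sf = map (eta m) [1..<m + 1] @ [last f]"
  have SfR: "\<forall>j\<in>{1..m+1}. lfun Sf j \<in> Rs m"
  proof
    fix j assume j: "j \<in> {1..m+1}"
    show "lfun Sf j \<in> Rs m"
    proof (cases "j = m+1")
      case True thus ?thesis using lfun_sec2 lastfR Sf_def by metis
    next
      case False thus ?thesis using j lfun_sec1[of j m eta "last f"] eta_in Sf_def by auto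
    qed
  qed
  have tilde_eq: "tilde_elt eta E A (last f) = (E, E @ [A], Sf)"
    unfolding tilde_elt_def Sf_def m_def by simp
  have tilde_ok: "(E, E @ [A], Sf) \<in> Mor \<Longrightarrow> (E, E @ [A], Sf) \<in> cc_Obtilde eta bind Mor"
  proof -
    assume "(E, E @ [A], Sf) \<in> Mor"
    moreover have "cc_comp bind (E, E @ [A], Sf) (cc_p eta (E @ [A])) = cc_id eta E"
    proof -
      have "map (bind (m+1) m (lfun Sf)) (map (eta (m+1)) [1..<m+1]) = map (lfun Sf) [1..<m+1]"
        using bind_eta[OF SfR] by auto
      also have "\<dots> = map (eta m) [1..<m+1]"
        using lfun_sec1[of _ m eta "last f"] Sf_def by auto
      finally show ?thesis unfolding cc_comp_def cc_p_def cc_id_def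
        by (simp add: m_def[symmetric] del: upt_Suc)
    qed
    ultimately show ?thesis unfolding cc_Obtilde_def cc_cod_def cc_dom_def cc_ft_def by simp
  qed
  show ?thesis
  proof
    assume "f \<in> cc_Hom Mor E T"
    hence F: "(E, T, f) \<in> Mor" unfolding cc_Hom_def by simp
    have comp: "cc_comp bind (E, T, f) (cc_p eta T) = (E, butlast T, butlast f)"
    proof -
      have "map (bind n m (lfun f)) (map (eta n) [1..<n]) = map (lfun f) [1..<n]"
        using bind_eta[OF fR] by auto
      also have "\<dots> = butlast f"
        by (rule nth_equalityI) (use assms(7) n1 n_def in \<open>auto simp: lfun_def nth_butlast\<close>)
      finally show ?thesis unfolding cc_comp_def cc_p_def
        by (simp add: n_def[symmetric] m_def[symmetric] del: upt_Suc)
    qed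
    have "(E, butlast T, butlast f) \<in> Mor"
      using C F pT comp unfolding cc_cod_def cc_dom_def cc_p_def by (metis fst_conv snd_conv)
    moreover have "cc_s eta bind rho (E, T, f) \<in> Mor"
      using C F assms(5,6) unfolding cc_cod_def by fastforce
    moreover have "cc_s eta bind rho (E, T, f) = (E, E @ [A], Sf)"
      unfolding cc_s_def A_def Sf_def m_def n_def by (simp add: comp cc_pb_def del: upt_Suc)
    ultimately show "butlast f \<in> cc_Hom Mor E (butlast T) \<and>
       tilde_elt eta E (rho (length T - 1) (length E) (lfun (butlast f)) (last T)) (last f)
         \<in> cc_Obtilde eta bind Mor"
      using tilde_ok tilde_eq unfolding cc_Hom_def A_def m_def n_def by simp
  next
    assume H: "butlast f \<in> cc_Hom Mor E (butlast T) \<and>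
       tilde_elt eta E (rho (length T - 1) (length E) (lfun (butlast f)) (last T)) (last f)
         \<in> cc_Obtilde eta bind Mor"
    hence F': "(E, butlast T, butlast f) \<in> Mor" unfolding cc_Hom_def by simp
    have S: "(E, E @ [A], Sf) \<in> Mor"
      using H tilde_eq unfolding cc_Obtilde_def A_def m_def n_def by simp
    have Q: "cc_q eta bind rho (E, butlast T, butlast f) T \<in> Mor"
      using C F' assms(5,6) unfolding cc_cod_def cc_ft_def by fastforce
    have Qeq: "cc_q eta bind rho (E, butlast T, butlast f) T =
       (E @ [A], T, map (bind m (m + 1) (eta (m + 1))) (butlast f) @ [eta (m + 1) (m + 1)])"
      unfolding cc_q_def cc_pb_def A_def m_def n_def by simp
    have "cc_comp bind (E, E @ [A], Sf) (cc_q eta bind rho (E, butlast T, butlast f) T) \<in> Mor"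
      using C S Q Qeq unfolding cc_cod_def cc_dom_def by (metis fst_conv snd_conv)
    moreover have "cc_comp bind (E, E @ [A], Sf) (cc_q eta bind rho (E, butlast T, butlast f) T)
        = (E, T, f)"
    proof -
      have etaR: "\<forall>i\<in>{1..m}. eta (m+1) i \<in> Rs (m+1)" using eta_in by auto
      have e1: "bind (m+1) m (lfun Sf) (bind m (m + 1) (eta (m + 1)) t) = t" if t: "t \<in> Rs m" for t
      proof -
        have "bind (m+1) m (lfun Sf) (bind m (m + 1) (eta (m + 1)) t)
            = bind m m (\<lambda>i. bind (m+1) m (lfun Sf) (eta (m+1) i)) t"
          using bind_assoc[OF etaR SfR t] .
        also have "\<dots> = bind m m (eta m) t"
          apply (rule bind_cong[OF _ t])
          using bind_eta[OF SfR] lfun_sec1[of _ m eta "last f"] Sf_def by auto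
        finally show ?thesis using bind_id t by simp
      qed
      have e2: "bind (m+1) m (lfun Sf) (eta (m + 1) (m + 1)) = last f"
        using bind_eta[OF SfR, of "m+1"] lfun_sec2[of eta m "last f"] Sf_def by simp
      have bfR: "\<forall>x\<in>set (butlast f). x \<in> Rs m"
        using assms(8) m_def by (metis in_set_butlastD in_set_conv_nth)
      have "map (bind (m+1) m (lfun Sf)) (map (bind m (m + 1) (eta (m + 1))) (butlast f)) = butlast f"
        using e1 bfR by (induct "butlast f") (auto simp: map_idI)
      hence "map (bind (m+1) m (lfun Sf))
          (map (bind m (m + 1) (eta (m + 1))) (butlast f) @ [eta (m + 1) (m + 1)]) = f"
      proof -
        have "f \<noteq> []" using assms(7) n1 n_def by auto
        thus ?thesis using e2 \<open>map _ _ = butlast f\<close> by simp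
      qed
      thus ?thesis unfolding Qeq cc_comp_def by (simp add: m_def[symmetric])
    qed
    ultimately show "f \<in> cc_Hom Mor E T" unfolding cc_Hom_def by simp
  qed
qed

end
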